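(* Let $S\subset[0,\infty)$ with $0\in S$, and let $\{f_n\colon S\to[0,\infty)\}$ be a sequence of decreasing right-continuous functions converging uniformly on $S$ to a function $f$. If $DP(\overline{f_n})\subset S$ for all $n$, then $f$ is decreasing and right-continuous and $DP(\overline{f})\subset S$.
   Context: For $S\subset[0,\infty)$ with $0\in S$, a function on $S$ is right-continuous if it is right-continuous for the relative topology of $S$. For a right-continuous decreasing $f\colon S\to[0,\infty)$ and $x\in\overline{S}$ (closure in $\mathbb{R}$), set $f(x+):=\sup\{f(y)\mid y\in(x,\infty)\cap S\}$ whenever $(x,\infty)\cap S\neq\emptyset$, and $f(x-):=\inf\{f(y)\mid y\in[0,x)\cap S\}$ if $x\neq0$, $f(0-):=f(0)$. Define $\overline{f}\colon\overline{S}\to[0,\infty)$ by $\overline{f}(x)=f(x)$ if $x\in S$, $\overline{f}(x)=f(x+)$ if $x\in\overline{S}\setminus S$ is a right accumulation point of $S$, and $\overline{f}(x)=f(x-)$ otherwise. With $\overline{f}(x-)$ defined by the same formula applied to $\overline{f}$ on $\overline{S}$, the set of left-jump points is $DP(\overline{f}):=\{x\in\overline{S}\setminus\{0\}\mid\overline{f}(x-)>\overline{f}(x)\}$. *)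

theory Defs
  imports "HOL-Analysis.Analysis"
begin

text \<open>Functions are modelled as total functions real => real; only values on S matter.\<close>

definition decreasing_on :: "real set \<Rightarrow> (real \<Rightarrow> real) \<Rightarrow> bool" where
  "decreasing_on S f \<longleftrightarrow> (\<forall>x\<in>S. \<forall>y\<in>S. x \<le> y \<longrightarrow> f y \<le> f x)"

definition right_cont_on :: "real set \<Rightarrow> (real \<Rightarrow> real) \<Rightarrow> bool" where
  "right_cont_on S f \<longleftrightarrow> (\<forall>x\<in>S. continuous (at x within (S \<inter> {x..})) f)"

definition rlim :: "real set \<Rightarrow> (real \<Rightarrow> real) \<Rightarrow> real \<Rightarrow> real" where
  "rlim S f x = Sup {f y | y. y \<in> S \<and> x < y}"

definition llim :: "real set \<Rightarrow> (real \<Rightarrow> real) \<Rightarrow> real \<Rightarrow> real" where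
  "llim S f x = (if x = 0 then f 0 else Inf {f y | y. y \<in> S \<and> 0 \<le> y \<and> y < x})"

definition right_acc :: "real set \<Rightarrow> real \<Rightarrow> bool" where
  "right_acc S x \<longleftrightarrow> x islimpt (S \<inter> {x<..})"

text \<open>The extension of f to the closure of S.\<close>
definition fbar :: "real set \<Rightarrow> (real \<Rightarrow> real) \<Rightarrow> real \<Rightarrow> real" where
  "fbar S f x = (if x \<in> S then f x
                 else if right_acc S x then rlim S f x
                 else llim S f x)"

definition DP :: "real set \<Rightarrow> (real \<Rightarrow> real) \<Rightarrow> real set" where
  "DP S f = {x \<in> closure S - {0}. llim (closure S) (fbar S f) x > fbar S f x}"

end

theory Submission
  imports Defs
begin

lemma img_eq: "{g y | y. P y} = g ` {y. P y}" by auto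

lemma sup_pert:
  fixes g h :: "real \<Rightarrow> real"
  assumes "I \<noteq> {}" "bdd_above (g ` I)" "\<forall>y\<in>I. \<bar>g y - h y\<bar> \<le> e"
  shows "\<bar>Sup (g ` I) - Sup (h ` I)\<bar> \<le> e"
proof -
  obtain B where B: "\<forall>y\<in>I. g y \<le> B" using assms(2) by (auto simp: bdd_above_def)
  have bh: "bdd_above (h ` I)" using B assms(3)
    by (intro bdd_aboveI2[where M="B+e"]) (smt (verit))
  have 1: "Sup (g ` I) \<le> Sup (h ` I) + e"
  proof (rule cSUP_least[OF assms(1)])
    fix y assume y: "y \<in> I"
    have "h y \<le> Sup (h ` I)" using bh y by (simp add: cSUP_upper)
    then show "g y \<le> Sup (h ` I) + e" using assms(3) y by (smt (verit))
  qed
  have 2: "Sup (h ` I) \<le> Sup (g ` I) + e"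
  proof (rule cSUP_least[OF assms(1)])
    fix y assume y: "y \<in> I"
    have "g y \<le> Sup (g ` I)" using assms(2) y by (simp add: cSUP_upper)
    then show "h y \<le> Sup (g ` I) + e" using assms(3) y by (smt (verit))
  qed
  show ?thesis using 1 2 by linarith
qed

lemma inf_pert:
  fixes g h :: "real \<Rightarrow> real"
  assumes "I \<noteq> {}" "bdd_below (g ` I)" "\<forall>y\<in>I. \<bar>g y - h y\<bar> \<le> e"
  shows "\<bar>Inf (g ` I) - Inf (h ` I)\<bar> \<le> e"
proof -
  obtain B where B: "\<forall>y\<in>I. B \<le> g y" using assms(2) by (auto simp: bdd_below_def)
  have bh: "bdd_below (h ` I)" using B assms(3)
    by (intro bdd_belowI2[where m="B-e"]) (smt (verit))
  have 1: "Inf (g ` I) - e \<le> Inf (h ` I)"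
  proof (rule cINF_greatest[OF assms(1)])
    fix y assume y: "y \<in> I"
    have "Inf (g ` I) \<le> g y" using assms(2) y by (simp add: cINF_lower)
    then show "Inf (g ` I) - e \<le> h y" using assms(3) y by (smt (verit))
  qed
  have 2: "Inf (h ` I) - e \<le> Inf (g ` I)"
  proof (rule cINF_greatest[OF assms(1)])
    fix y assume y: "y \<in> I"
    have "Inf (h ` I) \<le> h y" using bh y by (simp add: cINF_lower)
    then show "Inf (h ` I) - e \<le> g y" using assms(3) y by (smt (verit))
  qed
  show ?thesis using 1 2 by linarith
qed

lemma closure_nonneg:
  assumes "S \<subseteq> {0..}" "y \<in> closure S" shows "(0::real) \<le> y"
proof -
  have "closure S \<subseteq> {0..}" using assms(1) closure_minimal closed_atLeast by blast
  then show ?thesis using assms(2) by auto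
qed

lemma racc_ne:
  assumes "right_acc S y" shows "{z. z \<in> S \<and> y < z} \<noteq> {}"
  using assms unfolding right_acc_def islimpt_def
  by (metis (mono_tags, lifting) Int_iff empty_Collect_eq greaterThan_iff open_UNIV UNIV_I)

lemma fbar_nonneg:
  fixes g :: "real \<Rightarrow> real"
  assumes "S \<subseteq> {0..}" "0 \<in> S" "\<forall>x\<in>S. g x \<ge> 0" "decreasing_on S g" "y \<in> closure S"
  shows "fbar S g y \<ge> 0"
proof -
  have bd: "\<forall>z\<in>S. g z \<le> g 0" using assms(1,2,4) unfolding decreasing_on_def by auto
  show ?thesis
  proof (cases "y \<in> S")
    case True then show ?thesis using assms(3) by (simp add: fbar_def)
  next
    case nS: False
    show ?thesis
    proof (cases "right_acc S y")
      case True
      obtain z where z: "z \<in> S" "y < z" using racc_ne[OF True] by auto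
      have "bdd_above (g ` {z. z \<in> S \<and> y < z})" using bd by (intro bdd_aboveI2[where M="g 0"]) auto
      then have "g z \<le> Sup (g ` {z. z \<in> S \<and> y < z})" using z by (intro cSUP_upper) auto
      moreover have "0 \<le> g z" using z assms(3) by auto
      ultimately show ?thesis using nS True by (simp add: fbar_def rlim_def img_eq)
    next
      case False
      have y0: "y \<noteq> 0" using nS assms(2) by auto
      have "0 \<le> y" using closure_nonneg assms by blast
      with y0 have "0 \<in> {z. z \<in> S \<and> 0 \<le> z \<and> z < y}" using assms(2) by auto
      then have "0 \<le> Inf (g ` {z. z \<in> S \<and> 0 \<le> z \<and> z < y})"
        using assms(3) by (intro cINF_greatest) auto
      then show ?thesis using nS False y0 by (simp add: fbar_def llim_def img_eq)
    qed
  qed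
qed

lemma fbar_pert:
  fixes g h :: "real \<Rightarrow> real"
  assumes "S \<subseteq> {0..}" "0 \<in> S" "\<forall>x\<in>S. g x \<ge> 0" "decreasing_on S g"
    "\<forall>x\<in>S. \<bar>g x - h x\<bar> \<le> e" "y \<in> closure S"
  shows "\<bar>fbar S g y - fbar S h y\<bar> \<le> e"
proof -
  have bd: "\<forall>z\<in>S. g z \<le> g 0" using assms(1,2,4) unfolding decreasing_on_def by auto
  show ?thesis
  proof (cases "y \<in> S")
    case True then show ?thesis using assms(5) by (simp add: fbar_def)
  next
    case nS: False
    show ?thesis
    proof (cases "right_acc S y")
      case True
      have "bdd_above (g ` {z. z \<in> S \<and> y < z})" using bd by (intro bdd_aboveI2[where M="g 0"]) auto
      then have "\<bar>Sup (g ` {z. z \<in> S \<and> y < z}) - Sup (h ` {z. z \<in> S \<and> y < z})\<bar> \<le> e"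
        using racc_ne[OF True] assms(5) by (intro sup_pert) auto
      then show ?thesis using nS True by (simp add: fbar_def rlim_def img_eq)
    next
      case False
      have y0: "y \<noteq> 0" using nS assms(2) by auto
      have "0 \<le> y" using closure_nonneg assms by blast
      with y0 have "0 \<in> {z. z \<in> S \<and> 0 \<le> z \<and> z < y}" using assms(2) by auto
      moreover have "bdd_below (g ` {z. z \<in> S \<and> 0 \<le> z \<and> z < y})"
        using assms(3) by (intro bdd_belowI2[where m=0]) auto
      ultimately have "\<bar>Inf (g ` {z. z \<in> S \<and> 0 \<le> z \<and> z < y}) - Inf (h ` {z. z \<in> S \<and> 0 \<le> z \<and> z < y})\<bar> \<le> e"
        using assms(5) by (intro inf_pert) auto
      then show ?thesis using nS False y0 by (simp add: fbar_def llim_def img_eq)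
    qed
  qed
qed

lemma llim_pert:
  fixes g h :: "real \<Rightarrow> real"
  assumes "S \<subseteq> {0..}" "0 \<in> S" "\<forall>x\<in>S. g x \<ge> 0" "decreasing_on S g"
    "\<forall>x\<in>S. \<bar>g x - h x\<bar> \<le> e" "x \<in> closure S" "x \<noteq> 0"
  shows "\<bar>llim (closure S) (fbar S g) x - llim (closure S) (fbar S h) x\<bar> \<le> e"
proof -
  let ?I = "{y. y \<in> closure S \<and> 0 \<le> y \<and> y < x}"
  have "0 \<le> x" using closure_nonneg assms by blast
  with assms(7) have "0 \<in> ?I" using assms(2) closure_subset by auto
  moreover have "bdd_below (fbar S g ` ?I)"
    using fbar_nonneg[OF assms(1-4)] by (intro bdd_belowI2[where m=0]) auto
  ultimately have "\<bar>Inf (fbar S g ` ?I) - Inf (fbar S h ` ?I)\<bar> \<le> e"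
    using fbar_pert[OF assms(1-5)] by (intro inf_pert) auto
  then show ?thesis using assms(7) by (simp add: llim_def img_eq)
qed

theorem lemma2p7:
  fixes S :: "real set" and fn :: "nat \<Rightarrow> real \<Rightarrow> real" and f :: "real \<Rightarrow> real"
  assumes "S \<subseteq> {0..}" and "0 \<in> S"
    and "\<And>n. \<forall>x\<in>S. fn n x \<ge> 0"
    and "\<And>n. decreasing_on S (fn n)"
    and "\<And>n. right_cont_on S (fn n)"
    and "uniform_limit S fn f sequentially"
    and "\<And>n. DP S (fn n) \<subseteq> S"
  shows "decreasing_on S f \<and> right_cont_on S f \<and> DP S f \<subseteq> S"
proof -
  have pt: "\<And>x. x \<in> S \<Longrightarrow> (\<lambda>n. fn n x) \<longlonglongrightarrow> f x"
    by (rule tendsto_uniform_limitI[OF assms(6)])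
  have nn: "\<forall>x\<in>S. f x \<ge> 0"
  proof
    fix x assume x: "x \<in> S"
    show "f x \<ge> 0" by (rule LIMSEQ_le_const[OF pt[OF x]]) (use assms(3) x in simp)
  qed
  have dec: "decreasing_on S f"
    unfolding decreasing_on_def
  proof (intro ballI impI)
    fix x y assume xy: "x \<in> S" "y \<in> S" "x \<le> y"
    have "\<forall>n. fn n y \<le> fn n x" using assms(4) xy unfolding decreasing_on_def by blast
    then show "f y \<le> f x" by (intro LIMSEQ_le[OF pt[OF xy(2)] pt[OF xy(1)]]) blast
  qed
  have rc: "right_cont_on S f"
    unfolding right_cont_on_def
  proof
    fix x assume x: "x \<in> S"
    have ul: "uniform_limit (S \<inter> {x..}) fn f sequentially"
      using assms(6) by (rule uniform_limit_on_subset) auto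
    have "\<forall>\<^sub>F n in sequentially. (fn n \<longlongrightarrow> fn n x) (at x within (S \<inter> {x..}))"
      using assms(5) x unfolding right_cont_on_def continuous_within by simp
    then have "(f \<longlongrightarrow> f x) (at x within (S \<inter> {x..}))"
      by (rule swap_uniform_limit[OF _ pt[OF x] ul]) simp
    then show "continuous (at x within (S \<inter> {x..})) f" unfolding continuous_within .
  qed
  have "DP S f \<subseteq> S"
  proof
    fix x assume xd: "x \<in> DP S f"
    show "x \<in> S"
    proof (rule ccontr)
      assume xS: "x \<notin> S"
      have xc: "x \<in> closure S" "x \<noteq> 0" and gt: "llim (closure S) (fbar S f) x > fbar S f x"
        using xd by (auto simp: DP_def)
      define d where "d = (llim (closure S) (fbar S f) x - fbar S f x) / 3"
      have d: "d > 0" using gt by (simp add: d_def)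
      obtain N where N: "\<forall>n\<ge>N. \<forall>z\<in>S. dist (fn n z) (f z) < d"
        using uniform_limit_sequentially_iff[THEN iffD1, OF assms(6), rule_format, OF d] by blast
      have e: "\<forall>z\<in>S. \<bar>f z - fn N z\<bar> \<le> d"
      proof
        fix z assume "z \<in> S"
        then have "dist (fn N z) (f z) < d" using N by blast
        then show "\<bar>f z - fn N z\<bar> \<le> d" by (simp add: dist_real_def)
      qed
      have "x \<notin> DP S (fn N)" using assms(7) xS by blast
      then have le: "llim (closure S) (fbar S (fn N)) x \<le> fbar S (fn N) x"
        using xc by (auto simp: DP_def)
      have a1: "\<bar>llim (closure S) (fbar S f) x - llim (closure S) (fbar S (fn N)) x\<bar> \<le> d"
        by (rule llim_pert[OF assms(1,2) nn dec e xc])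
      have a2: "\<bar>fbar S f x - fbar S (fn N) x\<bar> \<le> d"
        by (rule fbar_pert[OF assms(1,2) nn dec e xc(1)])
      have d3: "3 * d = llim (closure S) (fbar S f) x - fbar S f x" by (simp add: d_def)
      show False using a1 a2 le d3 d unfolding abs_le_iff by (elim conjE) linarith
    qed
  qed
  then show ?thesis using dec rc by blast
qed

end
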